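(* Let $R$ be a ring with identity and involution $*$, and let $a,b\in R$ with $Ra=Ra^2$. Then the following are equivalent: (1) $a$ is core invertible with core inverse $b$; (2) $aba=a$, $(ab)^*=ab$ and $ab^2=b$.
   Context: An involution on $R$ satisfies $(a^* )^*=a$, $(ab)^*=b^*a^*$, $(a+b)^*=a^*+b^*$. An element $x\in R$ is a core inverse of $a$ if $axa=a$, $xR=aR$ and $Rx=Ra^*$; it is unique when it exists. $Ra=\{ra: r\in R\}$. *)

theory Defs
  imports Main
begin

definition involution :: "('a::ring_1 \<Rightarrow> 'a) \<Rightarrow> bool" where
  "involution star \<longleftrightarrow>
     (\<forall>a. star (star a) = a) \<and>
     (\<forall>a b. star (a * b) = star b * star a) \<and>
     (\<forall>a b. star (a + b) = star a + star b)"

definition right_ideal :: "'a::ring_1 \<Rightarrow> 'a set" where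
  "right_ideal x = {x * r | r. True}"

definition left_ideal :: "'a::ring_1 \<Rightarrow> 'a set" where
  "left_ideal x = {r * x | r. True}"

definition is_core_inverse :: "('a::ring_1 \<Rightarrow> 'a) \<Rightarrow> 'a \<Rightarrow> 'a \<Rightarrow> bool" where
  "is_core_inverse star a x \<longleftrightarrow>
     a * x * a = a \<and> right_ideal x = right_ideal a \<and> left_ideal x = left_ideal (star a)"

definition core_invertible :: "('a::ring_1 \<Rightarrow> 'a) \<Rightarrow> 'a \<Rightarrow> bool" where
  "core_invertible star a \<longleftrightarrow> (\<exists>x. is_core_inverse star a x)"

end

theory Submission
  imports Defs
begin

lemma ri_eq: "right_ideal (x::'a::ring_1) = right_ideal y \<longleftrightarrow> (\<exists>r. x = y*r) \<and> (\<exists>s. y = x*s)"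
proof
  assume h: "right_ideal x = right_ideal y"
  have "x \<in> right_ideal x" unfolding right_ideal_def by (metis (mono_tags) mem_Collect_eq mult_1_right)
  moreover have "y \<in> right_ideal y" unfolding right_ideal_def by (metis (mono_tags) mem_Collect_eq mult_1_right)
  ultimately show "(\<exists>r. x = y*r) \<and> (\<exists>s. y = x*s)" using h unfolding right_ideal_def by auto
next
  assume "(\<exists>r. x = y*r) \<and> (\<exists>s. y = x*s)"
  then obtain r s where "x = y*r" "y = x*s" by blast
  then show "right_ideal x = right_ideal y" unfolding right_ideal_def
    by (auto simp: mult.assoc) (metis mult.assoc)+
qed

lemma li_eq: "left_ideal (x::'a::ring_1) = left_ideal y \<longleftrightarrow> (\<exists>r. x = r*y) \<and> (\<exists>s. y = s*x)"
proof
  assume h: "left_ideal x = left_ideal y"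
  have "x \<in> left_ideal x" unfolding left_ideal_def by (metis (mono_tags) mem_Collect_eq mult_1_left)
  moreover have "y \<in> left_ideal y" unfolding left_ideal_def by (metis (mono_tags) mem_Collect_eq mult_1_left)
  ultimately show "(\<exists>r. x = r*y) \<and> (\<exists>s. y = s*x)" using h unfolding left_ideal_def by auto
next
  assume "(\<exists>r. x = r*y) \<and> (\<exists>s. y = s*x)"
  then obtain r s where "x = r*y" "y = s*x" by blast
  then show "left_ideal x = left_ideal y" unfolding left_ideal_def
    by (auto simp: mult.assoc[symmetric]) (metis mult.assoc)+
qed

theorem theorem3p3:
  fixes star :: "'a::ring_1 \<Rightarrow> 'a" and a b :: 'a
  assumes "involution star"
    and "left_ideal a = left_ideal (a ^ 2)"
  shows "(core_invertible star a \<and> is_core_inverse star a b) \<longleftrightarrow>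
         (a * b * a = a \<and> star (a * b) = a * b \<and> a * b ^ 2 = b)"
proof -
  have ss: "\<And>x. star (star x) = x" and sm: "\<And>x y. star (x*y) = star y * star x"
    using assms(1) unfolding involution_def by auto
  obtain c where c: "a = c * (a*a)" using assms(2) unfolding li_eq power2_eq_square by blast
  show ?thesis
  proof
    assume "core_invertible star a \<and> is_core_inverse star a b"
    then have aba: "a*b*a = a" and r: "right_ideal b = right_ideal a"
      and l: "left_ideal b = left_ideal (star a)" unfolding is_core_inverse_def by auto
    obtain r where br: "b = a*r" using r unfolding ri_eq by blast
    obtain s where bs: "b = s * star a" using l unfolding li_eq by blast
    have "star a = star a * star b * star a" using aba sm by (metis mult.assoc)
    then have b1: "b = b * star (a*b)" using bs sm by (metis mult.assoc)
    have h: "star (a*b) = a*b" using b1 sm ss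
      by (metis mult.assoc)
    moreover have "a * b^2 = b" using br aba by (simp add: power2_eq_square mult.assoc[symmetric])
    ultimately show "a * b * a = a \<and> star (a * b) = a * b \<and> a * b ^ 2 = b" using aba by simp
  next
    assume "a * b * a = a \<and> star (a * b) = a * b \<and> a * b ^ 2 = b"
    then have aba: "a*b*a = a" and h: "star (a*b) = a*b" and ab2: "a*(b*b) = b"
      by (auto simp: power2_eq_square)
    have b: "b = c*a*b" using c ab2 by (metis mult.assoc)
    have bab: "b*a*b = b" using b aba by (metis mult.assoc)
    have a: "a = b*(a*a)" using b c aba by (metis mult.assoc)
    have R: "right_ideal b = right_ideal a" unfolding ri_eq using a ab2 by metis
    have L: "left_ideal b = left_ideal (star a)" unfolding li_eq
    proof
      show "\<exists>r. b = r * star a" using bab h sm by (metis mult.assoc)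
      show "\<exists>s. star a = s * b" using aba h sm by (metis mult.assoc)
    qed
    have "is_core_inverse star a b" unfolding is_core_inverse_def using aba R L by blast
    then show "core_invertible star a \<and> is_core_inverse star a b"
      unfolding core_invertible_def by blast
  qed
qed

end
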